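(* Let $N_t, N_m, N_e$ be positive integers with $N_e < N_t$, put $n = N_t - N_e$, $m = \min(n, N_m)$, $k = \max(n, N_m)$. Fix $g>0$, $r_s>0$ and positive coefficients $b_1,\dots,b_m$ with $b_m \le \dots \le b_1$ and $\sum_{l=1}^m b_l = r_s$. For $\eta>0$ define $\xi(x) = \frac{n}{\eta}\big((1+g\eta)^x-1\big)$, $\alpha_l = \Gamma_{inc}(\xi(r_s),k-l+1)$, $\beta_l = \Gamma_{inc}(\xi(b_l),k-l+1)$, and for $x>0$ $$f_l(x) = \Big((1+g\eta)^x - x g\eta(1+g\eta)^{x-1} - 1\Big)\frac{\xi(x)^{k-l}e^{-\xi(x)}/(k-l)!}{\Gamma_{inc}(\xi(x),k-l+1)}.$$ Let $U(\eta) = \prod_{l=1}^m \alpha_l\Big(1 - \prod_{l=1}^m\big[1 - \frac{\beta_l}{\alpha_l}\big]\Big)$ (the upper bound on the zero-forcing secrecy outage probability). Then $$-\eta\frac{d}{d\eta}\ln U(\eta) = \frac{n}{\eta}\sum_{l=1}^m\left[f_l(r_s) + \frac{\beta_l}{\alpha_l}\big(f_l(b_l)-f_l(r_s)\big)\frac{\prod_{j\ne l}\big(1-\frac{\beta_j}{\alpha_j}\big)}{1-\prod_{j=1}^m\big(1-\frac{\beta_j}{\alpha_j}\big)}\right],$$ and this quantity is the secrecy diversity gain estimate $\hat d_s^U(r_s,\eta)$ of the zero-forcing scheme.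
   Context: $\Gamma_{inc}(x,a) = \frac{1}{(a-1)!}\int_0^x t^{a-1}e^{-t}\,dt$ for $x\ge 0$ and positive integer $a$. The secrecy diversity gain associated with an error probability $P(\eta)$ at SNR $\eta$ is defined as $-\eta\,\partial \ln P/\partial\eta$, with the secrecy rate $R_s = r_s\ln(1+g\eta)$ (fixed $r_s$). Products $\prod_{j\neq l}$ range over $j\in\{1,\dots,m\}\setminus\{l\}$. *)

theory Defs
  imports "HOL-Analysis.Analysis"
begin

text \<open>Normalized lower incomplete Gamma function, for positive integer a.\<close>
definition Gamma_inc :: "real \<Rightarrow> nat \<Rightarrow> real" where
  "Gamma_inc x a = (1 / fact (a - 1)) * integral {0..x} (\<lambda>t. t ^ (a - 1) * exp (- t))"

definition xi :: "nat \<Rightarrow> real \<Rightarrow> real \<Rightarrow> real \<Rightarrow> real" where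
  "xi n g \<eta> x = real n / \<eta> * ((1 + g * \<eta>) powr x - 1)"

definition f_l :: "nat \<Rightarrow> nat \<Rightarrow> nat \<Rightarrow> real \<Rightarrow> real \<Rightarrow> real \<Rightarrow> real" where
  "f_l n k l g \<eta> x =
     ((1 + g * \<eta>) powr x - x * g * \<eta> * (1 + g * \<eta>) powr (x - 1) - 1) *
     ((xi n g \<eta> x) ^ (k - l) * exp (- xi n g \<eta> x) / fact (k - l))
     / Gamma_inc (xi n g \<eta> x) (k - l + 1)"

definition alpha_l :: "nat \<Rightarrow> nat \<Rightarrow> nat \<Rightarrow> real \<Rightarrow> real \<Rightarrow> real \<Rightarrow> real" where
  "alpha_l n k l g rs \<eta> = Gamma_inc (xi n g \<eta> rs) (k - l + 1)"

definition beta_l :: "nat \<Rightarrow> nat \<Rightarrow> nat \<Rightarrow> real \<Rightarrow> (nat \<Rightarrow> real) \<Rightarrow> real \<Rightarrow> real" where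
  "beta_l n k l g b \<eta> = Gamma_inc (xi n g \<eta> (b l)) (k - l + 1)"

definition U_bound :: "nat \<Rightarrow> nat \<Rightarrow> nat \<Rightarrow> real \<Rightarrow> real \<Rightarrow> (nat \<Rightarrow> real) \<Rightarrow> real \<Rightarrow> real" where
  "U_bound n m k g rs b \<eta> =
     (\<Prod>l\<in>{1..m}. alpha_l n k l g rs \<eta>) *
     (1 - (\<Prod>l\<in>{1..m}. 1 - beta_l n k l g b \<eta> / alpha_l n k l g rs \<eta>))"

end

theory Submission imports Defs begin

lemma Gi_deriv:
  assumes "y > 0"
  shows "((\<lambda>y. Gamma_inc y c) has_real_derivative (y^(c-1)*exp(-y)/fact(c-1))) (at y)"
proof -
  have "((\<lambda>u. integral {0..u} (\<lambda>t. t ^ (c - 1) * exp (- t))) has_vector_derivative (y^(c-1)*exp(-y))) (at y within {0..2*y})"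
    by (rule integral_has_vector_derivative) (use assms in \<open>auto intro!: continuous_intros\<close>)
  moreover have "y \<in> interior {0..2*y}" using assms by (simp add: interior_atLeastAtMost_real)
  then have eq: "at y within {0..2*y} = at y" by (rule at_within_interior)
  ultimately have "((\<lambda>u. integral {0..u} (\<lambda>t. t ^ (c - 1) * exp (- t))) has_real_derivative (y^(c-1)*exp(-y))) (at y)"
    unfolding has_real_derivative_iff_has_vector_derivative eq by blast
  then have "((\<lambda>u. (1 / fact (c - 1)) * integral {0..u} (\<lambda>t. t ^ (c - 1) * exp (- t))) has_real_derivative (1 / fact (c - 1)) * (y^(c-1)*exp(-y))) (at y)"
    by (rule DERIV_cmult)
  then show ?thesis unfolding Gamma_inc_def by simp
qed

lemma Gi_zero: "Gamma_inc 0 c = 0"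
  by (simp add: Gamma_inc_def)

lemma Gi_cont: "continuous_on {0..Y} (\<lambda>y. Gamma_inc y c)"
proof -
  have "(\<lambda>t. t ^ (c - 1) * exp (- t)) integrable_on {0..Y}"
    by (rule integrable_continuous_real) (intro continuous_intros)
  then have "continuous_on {0..Y} (\<lambda>u. integral {0..u} (\<lambda>t. t ^ (c - 1) * exp (- t)))"
    by (rule indefinite_integral_continuous_1)
  then show ?thesis unfolding Gamma_inc_def by (rule continuous_on_mult_left)
qed

lemma Gi_strict: assumes "0 \<le> x" "x < y" shows "Gamma_inc x c < Gamma_inc y c"
proof (rule DERIV_pos_imp_increasing_open[OF assms(2)])
  fix z assume "x < z" "z < y"
  then show "\<exists>d. DERIV (\<lambda>y. Gamma_inc y c) z :> d \<and> d > 0"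
    proof (intro exI conjI)
    show "DERIV (\<lambda>y. Gamma_inc y c) z :> z^(c-1)*exp(-z)/fact(c-1)"
      by (rule Gi_deriv) (use \<open>x < z\<close> assms in linarith)
    show "z^(c-1)*exp(-z)/fact(c-1) > 0"
      using \<open>x < z\<close> assms by (intro divide_pos_pos mult_pos_pos) auto
  qed
next
  show "continuous_on {x..y} (\<lambda>y. Gamma_inc y c)"
  proof -
    have "{x..y} \<subseteq> {0..y}" using assms by auto
    then show ?thesis using continuous_on_subset[OF Gi_cont[of y c]] by blast
  qed
qed

lemma Gi_pos: "y > 0 \<Longrightarrow> Gamma_inc y c > 0"
  using Gi_strict[of 0 y c] by (simp add: Gi_zero)

lemma Gi_mono: "0 \<le> x \<Longrightarrow> x \<le> y \<Longrightarrow> Gamma_inc x c \<le> Gamma_inc y c"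
proof (cases "x = y")
  case False
  assume "0 \<le> x" "x \<le> y"
  with False have "x < y" by linarith
  then show ?thesis using Gi_strict[of x y c] \<open>0 \<le> x\<close> by linarith
qed simp


lemma xi_deriv:
  assumes "\<eta> > 0" "g > 0"
  shows "((\<lambda>e. xi n g e x) has_real_derivative
     (- (real n / \<eta>^2) * ((1 + g*\<eta>) powr x - x * g * \<eta> * (1 + g*\<eta>) powr (x - 1) - 1))) (at \<eta>)"
proof -
  have pos: "1 + g*\<eta> > 0" using assms by (simp add: add_pos_pos)
  have "((\<lambda>e. real n / e * ((1 + g * e) powr x - 1)) has_real_derivative
      (- (real n / \<eta>^2)) * ((1 + g * \<eta>) powr x - 1) + real n / \<eta> * (x * (1 + g*\<eta>) powr (x - 1) * g)) (at \<eta>)"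
    using assms pos
    by (auto intro!: derivative_eq_intros simp: power2_eq_square field_simps)
  then show ?thesis unfolding xi_def
    by (rule DERIV_cong) (use assms in \<open>simp add: power2_eq_square field_simps\<close>)
qed

lemma xi_pos: "\<eta> > 0 \<Longrightarrow> g > 0 \<Longrightarrow> x > 0 \<Longrightarrow> n > 0 \<Longrightarrow> xi n g \<eta> x > 0"
  unfolding xi_def by (intro mult_pos_pos divide_pos_pos) (auto simp: add_pos_pos)

lemma xi_mono: "\<eta> > 0 \<Longrightarrow> g > 0 \<Longrightarrow> x \<le> y \<Longrightarrow> xi n g \<eta> x \<le> xi n g \<eta> y"
  unfolding xi_def by (intro mult_left_mono diff_right_mono powr_mono) auto

lemma G_deriv:
  assumes "\<eta> > 0" "g > 0" "x > 0" "n > 0"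
  shows "\<exists>DG. ((\<lambda>e. Gamma_inc (xi n g e x) (k - l + 1)) has_real_derivative DG) (at \<eta>) \<and>
     - \<eta> * DG = real n / \<eta> * f_l n k l g \<eta> x * Gamma_inc (xi n g \<eta> x) (k - l + 1)"
proof -
  let ?y = "xi n g \<eta> x"
  let ?c = "k - l + 1"
  let ?Dx = "- (real n / \<eta>^2) * ((1 + g*\<eta>) powr x - x * g * \<eta> * (1 + g*\<eta>) powr (x - 1) - 1)"
  have ypos: "?y > 0" using xi_pos assms by blast
  have Gp: "Gamma_inc ?y ?c > 0" using Gi_pos[OF ypos] .
  have d: "((\<lambda>e. Gamma_inc (xi n g e x) ?c) has_real_derivative
       (?y^(?c-1)*exp(-?y)/fact(?c-1)) * ?Dx) (at \<eta>)"
    by (rule DERIV_chain2[OF Gi_deriv[OF ypos] xi_deriv[OF assms(1,2)]])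
  show ?thesis
  proof (intro exI conjI, rule d)
    show "- \<eta> * (?y^(?c-1)*exp(-?y)/fact(?c-1) * ?Dx) =
       real n / \<eta> * f_l n k l g \<eta> x * Gamma_inc ?y ?c"
      unfolding f_l_def using Gp assms(1) by (simp add: power2_eq_square field_simps)
  qed
qed


lemma aux_distr: "(a::real) * f + a * x * p / d = a * (f + x * p / d)"
  by (simp add: algebra_simps)

theorem corollary1:
  fixes Nt Nm Ne :: nat and g rs \<eta> :: real and b :: "nat \<Rightarrow> real"
  assumes "Nt > 0" "Nm > 0" "Ne > 0" "Ne < Nt"
    and "g > 0" "rs > 0" "\<eta> > 0"
    and "\<forall>l\<in>{1..min (Nt - Ne) Nm}. b l > 0"
    and "\<forall>i j. 1 \<le> i \<and> i \<le> j \<and> j \<le> min (Nt - Ne) Nm \<longrightarrow> b j \<le> b i"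
    and "(\<Sum>l\<in>{1..min (Nt - Ne) Nm}. b l) = rs"
  shows "let n = Nt - Ne; m = min n Nm; k = max n Nm;
             A = (\<lambda>l. alpha_l n k l g rs \<eta>); B = (\<lambda>l. beta_l n k l g b \<eta>);
             F = (\<lambda>l x. f_l n k l g \<eta> x)
         in \<exists>D. ((\<lambda>e. ln (U_bound n m k g rs b e)) has_real_derivative D) (at \<eta>) \<and>
               - \<eta> * D = real n / \<eta> *
                 (\<Sum>l\<in>{1..m}. F l rs + B l / A l * (F l (b l) - F l rs) *
                    (\<Prod>j\<in>{1..m} - {l}. 1 - B j / A j) /
                    (1 - (\<Prod>j\<in>{1..m}. 1 - B j / A j)))"
proof -
  define n where "n = Nt - Ne"
  define m where "m = min n Nm"
  define k where "k = max n Nm"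
  define I where "I = {1..m}"
  define Af where "Af = (\<lambda>l e. Gamma_inc (xi n g e rs) (k - l + 1))"
  define Bf where "Bf = (\<lambda>l e. Gamma_inc (xi n g e (b l)) (k - l + 1))"
  have npos: "n > 0" using assms(4) unfolding n_def by simp
  have mpos: "m \<ge> 1" using npos assms(2) unfolding m_def by simp
  have fin: "finite I" unfolding I_def by simp
  have oneI: "1 \<in> I" using mpos unfolding I_def by simp
  have bpos: "\<And>l. l \<in> I \<Longrightarrow> b l > 0" using assms(8) unfolding I_def m_def n_def by blast
  have bsum: "(\<Sum>l\<in>I. b l) = rs" using assms(10) unfolding I_def m_def n_def by blast
  have ble: "\<And>l. l \<in> I \<Longrightarrow> b l \<le> rs"
  proof -
    fix l assume l: "l \<in> I"
    have "b l \<le> (\<Sum>l\<in>I. b l)"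
      by (rule member_le_sum) (use l fin bpos in \<open>auto intro: less_imp_le\<close>)
    then show "b l \<le> rs" using bsum by simp
  qed
  have Apos: "\<And>l. Af l \<eta> > 0" unfolding Af_def
    by (intro Gi_pos xi_pos) (use assms npos in auto)
  have Bpos: "\<And>l. l \<in> I \<Longrightarrow> Bf l \<eta> > 0" unfolding Bf_def
    by (intro Gi_pos xi_pos) (use assms npos bpos in auto)
  have BleA: "\<And>l. l \<in> I \<Longrightarrow> Bf l \<eta> \<le> Af l \<eta>" unfolding Af_def Bf_def
    by (rule Gi_mono[OF less_imp_le[OF xi_pos] xi_mono]) (use assms npos bpos ble in auto)
  have DAex: "\<forall>l. \<exists>D. ((Af l) has_real_derivative D) (at \<eta>) \<and>
     - \<eta> * D = real n / \<eta> * f_l n k l g \<eta> rs * Af l \<eta>"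
  proof
    fix l
    show "\<exists>D. ((Af l) has_real_derivative D) (at \<eta>) \<and>
     - \<eta> * D = real n / \<eta> * f_l n k l g \<eta> rs * Af l \<eta>"
      unfolding Af_def by (rule G_deriv[OF assms(7) assms(5) assms(6) npos])
  qed
  obtain DA where DA0: "\<forall>l. ((Af l) has_real_derivative DA l) (at \<eta>) \<and>
     - \<eta> * DA l = real n / \<eta> * f_l n k l g \<eta> rs * Af l \<eta>"
    using choice[OF DAex] by (elim exE)
  have DA: "\<And>l. ((Af l) has_real_derivative DA l) (at \<eta>)"
    "\<And>l. - \<eta> * DA l = real n / \<eta> * f_l n k l g \<eta> rs * Af l \<eta>"
    using DA0 by simp_all
  have DBex: "\<forall>l. \<exists>D. l \<in> I \<longrightarrow> ((Bf l) has_real_derivative D) (at \<eta>) \<and>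
     - \<eta> * D = real n / \<eta> * f_l n k l g \<eta> (b l) * Bf l \<eta>"
  proof
    fix l
    show "\<exists>D. l \<in> I \<longrightarrow> ((Bf l) has_real_derivative D) (at \<eta>) \<and>
     - \<eta> * D = real n / \<eta> * f_l n k l g \<eta> (b l) * Bf l \<eta>"
    proof (cases "l \<in> I")
      case True
      have "\<exists>D. ((Bf l) has_real_derivative D) (at \<eta>) \<and>
        - \<eta> * D = real n / \<eta> * f_l n k l g \<eta> (b l) * Bf l \<eta>"
        unfolding Bf_def by (rule G_deriv[OF assms(7) assms(5) bpos[OF True] npos])
      then show ?thesis by blast
    qed simp
  qed
  obtain DB where DB0: "\<forall>l. l \<in> I \<longrightarrow> ((Bf l) has_real_derivative DB l) (at \<eta>) \<and>
     - \<eta> * DB l = real n / \<eta> * f_l n k l g \<eta> (b l) * Bf l \<eta>"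
    using choice[OF DBex] by (elim exE)
  have DB: "\<And>l. l \<in> I \<Longrightarrow> ((Bf l) has_real_derivative DB l) (at \<eta>)"
    "\<And>l. l \<in> I \<Longrightarrow> - \<eta> * DB l = real n / \<eta> * f_l n k l g \<eta> (b l) * Bf l \<eta>"
    using DB0 by simp_all
  define p where "p = (\<lambda>l e. 1 - Bf l e / Af l e)"
  define Dp where "Dp = (\<lambda>l. - ((DB l * Af l \<eta> - Bf l \<eta> * DA l) / (Af l \<eta>)^2))"
  have Dp: "\<And>l. l \<in> I \<Longrightarrow> ((p l) has_real_derivative Dp l) (at \<eta>)"
  proof -
    fix l assume l: "l \<in> I"
    have "((\<lambda>e. 1 - Bf l e / Af l e) has_real_derivative 0 - (DB l * Af l \<eta> - Bf l \<eta> * DA l) / (Af l \<eta> * Af l \<eta>)) (at \<eta>)"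
      by (intro DERIV_diff DERIV_const DERIV_divide DB(1)[OF l] DA(1)) (use Apos in \<open>simp add: less_imp_neq[symmetric]\<close>)
    then show "((p l) has_real_derivative Dp l) (at \<eta>)"
      unfolding p_def Dp_def by (simp add: power2_eq_square algebra_simps)
  qed
  define PA where "PA = (\<Prod>l\<in>I. Af l \<eta>)"
  define P where "P = (\<Prod>l\<in>I. p l \<eta>)"
  define SA where "SA = (\<Sum>l\<in>I. DA l * (\<Prod>j\<in>I-{l}. Af j \<eta>))"
  define SP where "SP = (\<Sum>l\<in>I. Dp l * (\<Prod>j\<in>I-{l}. p j \<eta>))"
  have PApos: "PA > 0" unfolding PA_def using Apos by (simp add: prod_pos)
  have p01: "\<And>l. l \<in> I \<Longrightarrow> 0 \<le> p l \<eta> \<and> p l \<eta> \<le> 1"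
    unfolding p_def using Apos Bpos BleA by (auto simp: field_simps less_imp_le)
  have p1: "p 1 \<eta> < 1" unfolding p_def using Apos Bpos[OF oneI] by simp
  have Plt: "P < 1"
  proof -
    have "P = p 1 \<eta> * (\<Prod>l\<in>I-{1}. p l \<eta>)" unfolding P_def using prod.remove[OF fin oneI] by simp
    also have "\<dots> \<le> p 1 \<eta>"
      using p01 oneI by (intro mult_left_le prod_le_1) auto
    finally show ?thesis using p1 by simp
  qed
  define U where "U = (\<lambda>e. (\<Prod>l\<in>I. Af l e) * (1 - (\<Prod>l\<in>I. p l e)))"
  have Ueq: "\<And>e. U_bound n m k g rs b e = U e"
    unfolding U_def U_bound_def alpha_l_def beta_l_def Af_def Bf_def p_def I_def by simp
  have Upos: "U \<eta> > 0" unfolding U_def using PApos Plt unfolding PA_def P_def by simp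
  have dU: "(U has_real_derivative SA * (1 - P) + PA * (0 - SP)) (at \<eta>)"
  proof -
    have d1: "((\<lambda>e. \<Prod>l\<in>I. Af l e) has_real_derivative SA) (at \<eta>)"
      unfolding SA_def by (rule has_field_derivative_prod) (rule DA(1))
    have d2: "((\<lambda>e. \<Prod>l\<in>I. p l e) has_real_derivative SP) (at \<eta>)"
      unfolding SP_def by (rule has_field_derivative_prod) (rule Dp)
    have d3: "((\<lambda>e. 1 - (\<Prod>l\<in>I. p l e)) has_real_derivative 0 - SP) (at \<eta>)"
      by (rule DERIV_diff[OF DERIV_const d2])
    have "((\<lambda>e. (\<Prod>l\<in>I. Af l e) * (1 - (\<Prod>l\<in>I. p l e))) has_real_derivative
        SA * (1 - (\<Prod>l\<in>I. p l \<eta>)) + (0 - SP) * (\<Prod>l\<in>I. Af l \<eta>)) (at \<eta>)"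
      by (rule DERIV_mult[OF d1 d3])
    then show ?thesis unfolding U_def PA_def P_def by (simp add: mult.commute)
  qed
  have dlnU: "((\<lambda>e. ln (U e)) has_real_derivative 1 / U \<eta> * (SA * (1 - P) + PA * (0 - SP))) (at \<eta>)"
    by (rule DERIV_chain2[OF DERIV_ln_divide[OF Upos] dU])
  have UetaE: "U \<eta> = PA * (1 - P)" unfolding U_def PA_def P_def by simp
  have SAdiv: "SA / PA = (\<Sum>l\<in>I. DA l / Af l \<eta>)"
    unfolding SA_def sum_divide_distrib
  proof (rule sum.cong[OF refl])
    fix l assume l: "l \<in> I"
    have "PA = Af l \<eta> * (\<Prod>j\<in>I-{l}. Af j \<eta>)" unfolding PA_def using prod.remove[OF fin l] by simp
    moreover have "(\<Prod>j\<in>I-{l}. Af j \<eta>) > 0" using Apos by (simp add: prod_pos)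
    ultimately show "DA l * (\<Prod>j\<in>I-{l}. Af j \<eta>) / PA = DA l / Af l \<eta>"
      using Apos[of l] by (simp add: field_simps)
  qed
  have main: "- \<eta> * (1 / U \<eta> * (SA * (1 - P) + PA * (0 - SP))) =
      (\<Sum>l\<in>I. - \<eta> * DA l / Af l \<eta>) + (\<Sum>l\<in>I. \<eta> * Dp l * (\<Prod>j\<in>I-{l}. p j \<eta>)) / (1 - P)"
  proof -
    have "- \<eta> * (1 / U \<eta> * (SA * (1 - P) + PA * (0 - SP))) = - \<eta> * (SA / PA) + \<eta> * SP / (1 - P)"
      unfolding UetaE using PApos Plt by (simp add: field_simps)
    also have "\<dots> = (\<Sum>l\<in>I. - \<eta> * DA l / Af l \<eta>) + (\<Sum>l\<in>I. \<eta> * Dp l * (\<Prod>j\<in>I-{l}. p j \<eta>)) / (1 - P)"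
      unfolding SAdiv SP_def by (simp add: sum_distrib_left mult.assoc)
    finally show ?thesis .
  qed
  have t1: "\<And>l. - \<eta> * DA l / Af l \<eta> = real n / \<eta> * f_l n k l g \<eta> rs"
  proof -
    fix l
    have "- \<eta> * DA l / Af l \<eta> = (real n / \<eta> * f_l n k l g \<eta> rs * Af l \<eta>) / Af l \<eta>"
      using DA(2)[of l] by simp
    also have "\<dots> = real n / \<eta> * f_l n k l g \<eta> rs" using Apos[of l] by simp
    finally show "- \<eta> * DA l / Af l \<eta> = real n / \<eta> * f_l n k l g \<eta> rs" .
  qed
  have t2: "\<And>l. l \<in> I \<Longrightarrow> \<eta> * Dp l = real n / \<eta> * (Bf l \<eta> / Af l \<eta> * (f_l n k l g \<eta> (b l) - f_l n k l g \<eta> rs))"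
  proof -
    fix l assume l: "l \<in> I"
    have "\<eta> * Dp l = (- \<eta> * DB l) / Af l \<eta> - Bf l \<eta> * (- \<eta> * DA l) / (Af l \<eta>)^2"
      unfolding Dp_def using Apos[of l] by (simp add: field_simps power2_eq_square)
    also have "\<dots> = real n / \<eta> * (Bf l \<eta> / Af l \<eta> * (f_l n k l g \<eta> (b l) - f_l n k l g \<eta> rs))"
      unfolding DB(2)[OF l] DA(2) using Apos[of l] assms(7) by (simp add: field_simps power2_eq_square)
    finally show "\<eta> * Dp l = real n / \<eta> * (Bf l \<eta> / Af l \<eta> * (f_l n k l g \<eta> (b l) - f_l n k l g \<eta> rs))" .
  qed
  have final: "- \<eta> * (1 / U \<eta> * (SA * (1 - P) + PA * (0 - SP))) = real n / \<eta> *
        (\<Sum>l\<in>I. f_l n k l g \<eta> rs + Bf l \<eta> / Af l \<eta> * (f_l n k l g \<eta> (b l) - f_l n k l g \<eta> rs) *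
           (\<Prod>j\<in>I - {l}. p j \<eta>) / (1 - P))"
    unfolding main sum_distrib_left sum_divide_distrib sum.distrib[symmetric]
  proof (rule sum.cong[OF refl])
    fix l assume l: "l \<in> I"
    show "- \<eta> * DA l / Af l \<eta> + \<eta> * Dp l * (\<Prod>j\<in>I - {l}. p j \<eta>) / (1 - P) =
      real n / \<eta> * (f_l n k l g \<eta> rs + Bf l \<eta> / Af l \<eta> * (f_l n k l g \<eta> (b l) - f_l n k l g \<eta> rs) *
           (\<Prod>j\<in>I - {l}. p j \<eta>) / (1 - P))"
      unfolding t1 t2[OF l] by (rule aux_distr)
  qed
  show ?thesis
    unfolding Let_def n_def[symmetric] m_def[symmetric] k_def[symmetric]
  proof (intro exI conjI)
    show "((\<lambda>e. ln (U_bound n m k g rs b e)) has_real_derivative 1 / U \<eta> * (SA * (1 - P) + PA * (0 - SP))) (at \<eta>)"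
      using dlnU by (simp only: Ueq)
    show "- \<eta> * (1 / U \<eta> * (SA * (1 - P) + PA * (0 - SP))) = real n / \<eta> *
      (\<Sum>l\<in>{1..m}. f_l n k l g \<eta> rs + beta_l n k l g b \<eta> / alpha_l n k l g rs \<eta> *
          (f_l n k l g \<eta> (b l) - f_l n k l g \<eta> rs) *
          (\<Prod>j\<in>{1..m} - {l}. 1 - beta_l n k j g b \<eta> / alpha_l n k j g rs \<eta>) /
          (1 - (\<Prod>j\<in>{1..m}. 1 - beta_l n k j g b \<eta> / alpha_l n k j g rs \<eta>)))"
      using final unfolding I_def P_def p_def alpha_l_def beta_l_def Af_def Bf_def .
  qed
qed

end
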